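(* Let $\pi$ be a (not necessarily unique) QSD of $(X_t)_{0\le t<\tau_\partial}$, $\lambda=\lambda(\pi)$, and assume condition (DAD) holds with set $A$, function $\psi$, constants $c_0',c_1>0$ and times $t_0,t_1>0$. Define $t_3:=t_0+t_1$ and $$c_3:=\frac{\lambda^{t_0}c_0'c_1}{\Lambda(A)\|\psi\|_\infty\|1/\psi\|_\infty\|\frac{d\pi}{d\Lambda}\|_{L^\infty(\Lambda)}}.$$ Then $\dfrac{P_{t_3}(x,\cdot)}{P_{t_3}1(x)}\ge c_3\pi(\cdot)$ for every $x\in\chi$.
   Context: $\chi$ is a metric space with Borel $\sigma$-algebra and a distinguished $\sigma$-finite Borel measure $\Lambda$ of full support. $(X_t)_{0\le t<\tau_\partial}$ is a killed Markov process on $\chi$ (discrete or continuous time), absorption time $\tau_\partial$, submarkovian semigroup $P_t(x,A)=\mathbb P_x(X_t\in A,\tau_\partial>t)$; $K1(x)=K(x,\chi)$. A QSD is $\pi\in\mathcal P(\chi)$ with $\mathbb P_\pi(X_t\in\cdot\mid\tau_\partial>t)=\pi$ for all $t$; $\lambda(\pi)=\mathbb P_\pi(\tau_\partial>1)$. $\mathcal P_\infty(\Lambda)$ = probability measures $\ll\Lambda$ with density in $L^\infty(\Lambda)$. $\mathcal B_{b,\gg}(\chi)$ = bounded Borel functions with positive infimum. (AD): there exist $\psi\in\mathcal B_{b,\gg}(\chi)$, $t_0>0$, $a>0$ and a submarkovian kernel $\tilde P$ with $\psi(x)\Lambda(dx)P_{t_0}(x,dy)=a\psi(y)\Lambda(dy)\tilde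 P(y,dx)$ on $\chi\times\chi$, $\tilde P1(y)>0$ for $\Lambda$-a.e. $y$, and $c_0'>0$, $\nu\in\mathcal P(\chi)$ not mutually singular with $\pi$ with $\tilde P(y,\cdot)/\tilde P1(y)\ge c_0'\nu$ for $\Lambda$-a.e. $y$. (DAD) Combined Dobrushin and adjoint Dobrushin condition: $\pi\in\mathcal P_\infty(\Lambda)$; there are a Borel set $A$ with $\Lambda(A)<\infty$, $\nu_1\in\mathcal P(\chi)$ with $\nu_1(\chi\setminus A)=0$, $c_1>0$, $t_1>0$ with $P_{t_1}1(x)>0$ for all $x$ and $P_{t_1}(x,\cdot)/P_{t_1}1(x)\ge c_1\nu_1$ for all $x\in\chi$ (this forces $\pi(A)>0$, hence $\Lambda(A)>0$); and (AD) holds with $\nu:=\Lambda|_A/\Lambda(A)$, some $c_0'>0$ and $t_0>0$. *)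

theory Defs
  imports "HOL-Probability.Probability"
begin

definition time_domain :: "real set \<Rightarrow> bool" where
  "time_domain T \<longleftrightarrow> T = range real \<or> T = {0..}"

definition submarkov_kernel :: "('a::topological_space \<Rightarrow> 'a measure) \<Rightarrow> bool" where
  "submarkov_kernel K \<longleftrightarrow> K \<in> borel \<rightarrow>\<^sub>M subprob_algebra borel"

text \<open>Submarkovian semigroup P t (x, A) = P_x(X_t in A, tau > t) indexed by T.\<close>
definition submarkov_semigroup :: "real set \<Rightarrow> (real \<Rightarrow> 'a::topological_space \<Rightarrow> 'a measure) \<Rightarrow> bool" where
  "submarkov_semigroup T P \<longleftrightarrow>
     (\<forall>t\<in>T. submarkov_kernel (P t)) \<and>
     (\<forall>s\<in>T. \<forall>t\<in>T. \<forall>x. \<forall>B\<in>sets borel.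
        emeasure (P (s + t) x) B = (\<integral>\<^sup>+ y. emeasure (P t y) B \<partial>(P s x)))"

text \<open>P_mu(X_t in B, tau > t) = (mu P_t)(B).\<close>
definition muP :: "'a measure \<Rightarrow> (real \<Rightarrow> 'a \<Rightarrow> 'a measure) \<Rightarrow> real \<Rightarrow> 'a set \<Rightarrow> real" where
  "muP \<mu> P t B = (\<integral> x. measure (P t x) B \<partial>\<mu>)"

definition borel_prob :: "'a::topological_space measure \<Rightarrow> bool" where
  "borel_prob \<mu> \<longleftrightarrow> prob_space \<mu> \<and> sets \<mu> = sets borel"

definition is_QSD :: "real set \<Rightarrow> (real \<Rightarrow> 'a::topological_space \<Rightarrow> 'a measure) \<Rightarrow> 'a measure \<Rightarrow> bool" where
  "is_QSD T P \<pi> \<longleftrightarrow> borel_prob \<pi> \<and>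
     (\<forall>t\<in>T. muP \<pi> P t UNIV > 0 \<and>
        (\<forall>B\<in>sets borel. muP \<pi> P t B / muP \<pi> P t UNIV = measure \<pi> B))"

definition lambda_QSD :: "(real \<Rightarrow> 'a \<Rightarrow> 'a measure) \<Rightarrow> 'a measure \<Rightarrow> real" where
  "lambda_QSD P \<pi> = muP \<pi> P 1 UNIV"

definition ref_measure :: "'a::metric_space measure \<Rightarrow> bool" where
  "ref_measure \<Lambda> \<longleftrightarrow> sets \<Lambda> = sets borel \<and> sigma_finite_measure \<Lambda> \<and>
     (\<forall>U. open U \<and> U \<noteq> {} \<longrightarrow> emeasure \<Lambda> U > 0)"

definition P_inf :: "'a::topological_space measure \<Rightarrow> 'a measure \<Rightarrow> bool" where
  "P_inf \<Lambda> \<pi> \<longleftrightarrow> borel_prob \<pi> \<and> absolutely_continuous \<Lambda> \<pi> \<and>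
     esssup \<Lambda> (RN_deriv \<Lambda> \<pi>) < \<infinity>"

definition dens_Linf :: "'a measure \<Rightarrow> 'a measure \<Rightarrow> real" where
  "dens_Linf \<Lambda> \<pi> = enn2real (esssup \<Lambda> (RN_deriv \<Lambda> \<pi>))"

definition Bb_pos :: "('a::topological_space \<Rightarrow> real) \<Rightarrow> bool" where
  "Bb_pos f \<longleftrightarrow> f \<in> borel_measurable borel \<and> bounded (range f) \<and> (INF x. f x) > 0"

definition sup_norm :: "('a \<Rightarrow> real) \<Rightarrow> real" where
  "sup_norm f = (SUP x. \<bar>f x\<bar>)"

definition mutually_singular :: "'a::topological_space measure \<Rightarrow> 'a measure \<Rightarrow> bool" where
  "mutually_singular \<mu> \<nu> \<longleftrightarrow> (\<exists>S\<in>sets borel. emeasure \<mu> S = 0 \<and> emeasure \<nu> (UNIV - S) = 0)"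

definition cond_AD ::
  "real set \<Rightarrow> (real \<Rightarrow> 'a::topological_space \<Rightarrow> 'a measure) \<Rightarrow> 'a measure \<Rightarrow> 'a measure \<Rightarrow>
   ('a \<Rightarrow> real) \<Rightarrow> real \<Rightarrow> real \<Rightarrow> ('a \<Rightarrow> 'a measure) \<Rightarrow> real \<Rightarrow> 'a measure \<Rightarrow> bool" where
  "cond_AD T P \<Lambda> \<pi> \<psi> t0 a Pt c0 \<nu> \<longleftrightarrow>
     Bb_pos \<psi> \<and> t0 \<in> T \<and> t0 > 0 \<and> a > 0 \<and> submarkov_kernel Pt \<and>
     (\<forall>D\<in>sets (borel \<Otimes>\<^sub>M borel).
        (\<integral>\<^sup>+ x. ennreal (\<psi> x) * (\<integral>\<^sup>+ y. indicator D (x, y) \<partial>(P t0 x)) \<partial>\<Lambda>)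
        = ennreal a * (\<integral>\<^sup>+ y. ennreal (\<psi> y) * (\<integral>\<^sup>+ x. indicator D (x, y) \<partial>(Pt y)) \<partial>\<Lambda>)) \<and>
     (AE y in \<Lambda>. measure (Pt y) UNIV > 0) \<and>
     c0 > 0 \<and> borel_prob \<nu> \<and> \<not> mutually_singular \<nu> \<pi> \<and>
     (AE y in \<Lambda>. \<forall>B\<in>sets borel. measure (Pt y) B / measure (Pt y) UNIV \<ge> c0 * measure \<nu> B)"

definition norm_restr :: "'a measure \<Rightarrow> 'a set \<Rightarrow> 'a measure" where
  "norm_restr \<Lambda> A = density \<Lambda> (\<lambda>x. indicator A x / emeasure \<Lambda> A)"

end

theory Submission
  imports Defs
begin


lemma kern_facts:
  assumes "submarkov_kernel K"
  shows "sets (K x) = sets borel" "space (K x) = UNIV" "subprob_space (K x)"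
proof -
  have K: "K \<in> borel \<rightarrow>\<^sub>M subprob_algebra borel" using assms by (simp add: submarkov_kernel_def)
  show "sets (K x) = sets borel" "space (K x) = UNIV" using subprob_measurableD[OF K] by auto
  show "subprob_space (K x)" using measurable_space[OF K, of x] by (auto simp: space_subprob_algebra)
qed

lemma kern_emeasure:
  assumes "submarkov_kernel K"
  shows "emeasure (K x) B = ennreal (measure (K x) B)" "measure (K x) B \<le> 1"
proof -
  interpret subprob_space "K x" using kern_facts[OF assms] by auto
  show "emeasure (K x) B = ennreal (measure (K x) B)" by (simp add: emeasure_eq_measure)
  show "measure (K x) B \<le> 1" by (simp add: subprob_measure_le_1)
qed

lemma kern_meas:
  assumes "submarkov_kernel K" "B \<in> sets borel"
  shows "(\<lambda>x. measure (K x) B) \<in> borel_measurable borel"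
    "(\<lambda>x. emeasure (K x) B) \<in> borel_measurable borel"
proof -
  have K: "K \<in> borel \<rightarrow>\<^sub>M subprob_algebra borel" using assms by (simp add: submarkov_kernel_def)
  show "(\<lambda>x. emeasure (K x) B) \<in> borel_measurable borel"
    using measurable_compose[OF K measurable_emeasure_subprob_algebra[OF assms(2)]] by simp
  show "(\<lambda>x. measure (K x) B) \<in> borel_measurable borel"
    using measurable_compose[OF K measurable_measure_subprob_algebra[OF assms(2)]] by simp
qed

lemma kern_int:
  assumes "submarkov_kernel K" "B \<in> sets borel" "borel_prob \<pi>"
  shows "(\<integral>\<^sup>+x. emeasure (K x) B \<partial>\<pi>) = ennreal (\<integral>x. measure (K x) B \<partial>\<pi>)"
proof -
  interpret prob_space \<pi> using assms by (simp add: borel_prob_def)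
  have s: "sets \<pi> = sets borel" using assms by (simp add: borel_prob_def)
  have m: "(\<lambda>x. measure (K x) B) \<in> borel_measurable \<pi>"
    using kern_meas(1)[OF assms(1,2)] by (simp add: measurable_cong_sets[OF s refl])
  have i: "integrable \<pi> (\<lambda>x. measure (K x) B)"
    apply (rule integrable_const_bound[where B=1])
    using kern_emeasure[OF assms(1)] m by auto
  show ?thesis
    by (simp add: kern_emeasure[OF assms(1)] nn_integral_eq_integral[OF i])
qed



lemma td1: "time_domain T \<Longrightarrow> real (n::nat) \<in> T"
  unfolding time_domain_def by auto
lemma td2: "time_domain T \<Longrightarrow> s \<in> T \<Longrightarrow> t \<in> T \<Longrightarrow> s + t \<in> T"
  unfolding time_domain_def by (auto simp flip: of_nat_add)
lemma td3: "time_domain T \<Longrightarrow> s \<in> T \<Longrightarrow> t \<in> T \<Longrightarrow> s \<le> t \<Longrightarrow> t - s \<in> T"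
  unfolding time_domain_def by (auto simp flip: of_nat_diff)
lemma td4: "time_domain T \<Longrightarrow> t \<in> T \<Longrightarrow> t \<ge> 0"
  unfolding time_domain_def by auto
lemma td5: "time_domain T \<Longrightarrow> t \<in> T \<Longrightarrow> real (nat \<lceil>t\<rceil>) - t \<in> T"
  unfolding time_domain_def by (auto simp: of_nat_nat)

lemma QSD_int:
  assumes Q: "is_QSD T P \<pi>" and S: "submarkov_semigroup T P" and s: "s \<in> T"
    and g: "g \<in> borel_measurable borel"
  shows "(\<integral>\<^sup>+x. \<integral>\<^sup>+y. g y \<partial>P s x \<partial>\<pi>) = ennreal (muP \<pi> P s UNIV) * (\<integral>\<^sup>+y. g y \<partial>\<pi>)"
proof -
  have bp: "borel_prob \<pi>" using Q by (simp add: is_QSD_def)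
  interpret prob_space \<pi> using bp by (simp add: borel_prob_def)
  have sp: "sets \<pi> = sets borel" using bp by (simp add: borel_prob_def)
  have K: "submarkov_kernel (P s)" using S s by (simp add: submarkov_semigroup_def)
  have Km: "P s \<in> \<pi> \<rightarrow>\<^sub>M subprob_algebra borel"
    using K by (simp add: submarkov_kernel_def measurable_cong_sets[OF sp refl])
  define l where "l = muP \<pi> P s UNIV"
  have lpos: "l > 0" using Q s by (simp add: is_QSD_def l_def)
  have muB: "muP \<pi> P s B = l * measure \<pi> B" if "B \<in> sets borel" for B
  proof -
    have "muP \<pi> P s B / l = measure \<pi> B" using Q s that unfolding is_QSD_def l_def by blast
    then show ?thesis using lpos by (simp add: divide_eq_eq mult.commute)
  qed
  have eq: "\<pi> \<bind> P s = density \<pi> (\<lambda>_. ennreal l)"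
  proof (rule measure_eqI)
    show "sets (\<pi> \<bind> P s) = sets (density \<pi> (\<lambda>_. ennreal l))"
    proof -
      have "sets (\<pi> \<bind> P s) = sets borel"
        by (rule sets_bind) (use kern_facts[OF K] not_empty in auto)
      then show ?thesis using sp by simp
    qed
    fix B assume "B \<in> sets (\<pi> \<bind> P s)"
    moreover have "sets (\<pi> \<bind> P s) = sets borel"
      by (rule sets_bind) (use kern_facts[OF K] not_empty in auto)
    ultimately have B: "B \<in> sets borel" by simp
    have "emeasure (\<pi> \<bind> P s) B = (\<integral>\<^sup>+x. emeasure (P s x) B \<partial>\<pi>)"
      by (rule emeasure_bind[OF _ Km B]) (use not_empty in auto)
    also have "\<dots> = ennreal (muP \<pi> P s B)" using kern_int[OF K B bp] by (simp add: muP_def)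
    also have "\<dots> = ennreal l * emeasure \<pi> B"
      using muB[OF B] lpos by (simp add: emeasure_eq_measure ennreal_mult)
    also have "\<dots> = emeasure (density \<pi> (\<lambda>_. ennreal l)) B"
      using B sp by (simp add: emeasure_density nn_integral_cmult_indicator)
    finally show "emeasure (\<pi> \<bind> P s) B = emeasure (density \<pi> (\<lambda>_. ennreal l)) B" .
  qed
  have "(\<integral>\<^sup>+x. \<integral>\<^sup>+y. g y \<partial>P s x \<partial>\<pi>) = (\<integral>\<^sup>+y. g y \<partial>(\<pi> \<bind> P s))"
    by (rule nn_integral_bind[OF g Km, symmetric])
  also have "\<dots> = (\<integral>\<^sup>+y. ennreal l * g y \<partial>\<pi>)"
    unfolding eq using g sp by (simp add: nn_integral_density measurable_cong_sets[OF sp refl])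
  also have "\<dots> = ennreal l * (\<integral>\<^sup>+y. g y \<partial>\<pi>)"
    using g by (simp add: nn_integral_cmult measurable_cong_sets[OF sp refl])
  finally show ?thesis by (simp add: l_def)
qed



locale qsdctx =
  fixes T P \<pi>
  assumes td: "time_domain T" and S: "submarkov_semigroup T P" and Q: "is_QSD T P \<pi>"
begin

definition "L s = muP \<pi> P s UNIV"

lemma bp: "borel_prob \<pi>" using Q by (simp add: is_QSD_def)
lemma K: "s \<in> T \<Longrightarrow> submarkov_kernel (P s)" using S by (simp add: submarkov_semigroup_def)
lemma Lpos: "s \<in> T \<Longrightarrow> L s > 0" using Q by (simp add: is_QSD_def L_def)

lemma L_enn: "s \<in> T \<Longrightarrow> ennreal (L s) = (\<integral>\<^sup>+x. emeasure (P s x) UNIV \<partial>\<pi>)"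
  using kern_int[OF K _ bp, of s UNIV] by (simp add: L_def muP_def)

lemma L_le1: assumes "s \<in> T" shows "L s \<le> 1"
proof -
  interpret prob_space \<pi> using bp by (simp add: borel_prob_def)
  have "ennreal (L s) \<le> (\<integral>\<^sup>+x. 1 \<partial>\<pi>)"
    unfolding L_enn[OF assms] by (rule nn_integral_mono) (simp add: kern_emeasure[OF K[OF assms]])
  then show ?thesis by (simp add: emeasure_space_1)
qed

lemma L_mult: assumes s: "s \<in> T" and t: "t \<in> T" shows "L (s + t) = L s * L t"
proof -
  have st: "s + t \<in> T" using td2[OF td s t] .
  have "ennreal (L (s + t)) = (\<integral>\<^sup>+x. emeasure (P (s+t) x) UNIV \<partial>\<pi>)" using L_enn[OF st] .
  also have "\<dots> = (\<integral>\<^sup>+x. \<integral>\<^sup>+y. emeasure (P t y) UNIV \<partial>P s x \<partial>\<pi>)"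
    using S s t unfolding submarkov_semigroup_def by (intro nn_integral_cong) auto
  also have "\<dots> = ennreal (L s) * (\<integral>\<^sup>+y. emeasure (P t y) UNIV \<partial>\<pi>)"
    unfolding L_def by (rule QSD_int[OF Q S s kern_meas(2)[OF K[OF t]]]) simp
  also have "\<dots> = ennreal (L s * L t)"
    using L_enn[OF t] Lpos[OF s] Lpos[OF t] by (simp add: ennreal_mult)
  finally show ?thesis using Lpos[OF s] Lpos[OF t] Lpos[OF st] by simp
qed

lemma L_anti: assumes "s \<in> T" "u \<in> T" "s \<le> u" shows "L u \<le> L s"
proof -
  have d: "u - s \<in> T" using td3[OF td assms] .
  have "L u = L s * L (u - s)" using L_mult[OF assms(1) d] by simp
  also have "\<dots> \<le> L s * 1" using L_le1[OF d] Lpos[OF assms(1)] by (intro mult_left_mono) auto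
  finally show ?thesis by simp
qed

lemma multT: assumes "t \<in> T" shows "real n * t \<in> T"
proof (induction n)
  case 0 then show ?case using td1[OF td, of 0] by simp
next
  case (Suc n)
  then have "real n * t + t \<in> T" using td2[OF td _ assms] by blast
  then show ?case by (simp add: algebra_simps)
qed

lemma L_pow: assumes "t \<in> T" shows "L (real (Suc n) * t) = L t ^ Suc n"
proof (induction n)
  case 0 then show ?case by simp
next
  case (Suc n)
  have m: "real (Suc n) * t \<in> T"
    using multT[OF assms] .
  have "real (Suc (Suc n)) * t = real (Suc n) * t + t" by (simp add: algebra_simps)
  then show ?case using L_mult[OF m assms] Suc by simp
qed

lemma L_powr: assumes t: "t \<in> T" and tpos: "t > 0" shows "L 1 powr t \<le> L t"
proof -
  have one: "1 \<in> T" using td1[OF td, of 1] by simp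
  define l where "l = L 1"
  have l0: "l > 0" and l1: "l \<le> 1" using Lpos[OF one] L_le1[OF one] by (auto simp: l_def)
  have lt0: "l powr t > 0" using l0 by simp
  define q where "q = L t / l powr t"
  have q0: "q \<ge> 0" using Lpos[OF t] lt0 by (simp add: q_def)
  have key: "q ^ Suc n \<ge> l" for n
  proof -
    define x where "x = real (Suc n) * t"
    have xT: "x \<in> T" unfolding x_def using multT[OF t] .
    have xpos: "x > 0" using tpos by (simp add: x_def)
    define k where "k = nat \<lceil>x\<rceil>"
    have kx: "real k \<ge> x" "real k \<le> x + 1" using xpos by (auto simp: k_def)
    have kpos: "k \<ge> 1" using xpos kx by linarith
    then obtain m where km: "k = Suc m" by (cases k) auto
    have kT: "real k \<in> T" using td1[OF td] .
    have "L t ^ Suc n = L x" using L_pow[OF t] by (simp add: x_def)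
    also have "\<dots> \<ge> L (real k)" using L_anti[OF xT kT kx(1)] by simp
    finally have a: "L t ^ Suc n \<ge> L (real k)" .
    have "L (real k) = l ^ k" using L_pow[OF one, of m] km by (simp add: l_def)
    also have "\<dots> = l powr real k" using powr_realpow[OF l0] by simp
    also have "\<dots> \<ge> l powr (x + 1)" using powr_mono'[OF kx(2)] l0 l1 by simp
    finally have b: "L (real k) \<ge> l powr (x + 1)" .
    have c: "l powr (x + 1) = (l powr t) ^ Suc n * l"
      using l0 by (simp add: powr_add x_def powr_powr[symmetric] powr_realpow mult.commute)
    have "(l powr t) ^ Suc n * l \<le> L t ^ Suc n" using a b c by simp
    also have "L t ^ Suc n = q ^ Suc n * (l powr t) ^ Suc n"
      using lt0 by (simp add: q_def power_divide)
    finally have "(l powr t) ^ Suc n * l \<le> (l powr t) ^ Suc n * q ^ Suc n" by (simp add: mult.commute)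
    then show ?thesis using lt0 by simp
  qed
  have "q \<ge> 1"
  proof (rule ccontr)
    assume "\<not> q \<ge> 1"
    then obtain n where n: "q ^ n < l" using real_arch_pow_inv[OF l0] by force
    show False
    proof (cases n)
      case 0 then show False using n l1 by simp
    next
      case (Suc m) then show False using n key[of m] by simp
    qed
  qed
  then show ?thesis using lt0 by (simp add: q_def l_def le_divide_eq)
qed

end


lemma AE_from_int:
  fixes f :: "'a \<Rightarrow> ennreal"
  assumes f[measurable]: "f \<in> borel_measurable M" and A[measurable]: "A \<in> sets M"
    and fin: "(\<integral>\<^sup>+x. f x * indicator A x \<partial>M) \<noteq> \<infinity>"
    and H: "\<And>A'. A' \<in> sets M \<Longrightarrow> A' \<subseteq> A \<Longrightarrow> c * emeasure M A' \<le> (\<integral>\<^sup>+x. f x * indicator A' x \<partial>M)"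
  shows "AE x in M. x \<in> A \<longrightarrow> c \<le> f x"
proof -
  define E where "E = {x \<in> space M. x \<in> A \<and> f x < c}"
  have E[measurable]: "E \<in> sets M" unfolding E_def by measurable
  have EA: "E \<subseteq> A" unfolding E_def by auto
  have fE: "(\<integral>\<^sup>+x. f x * indicator E x \<partial>M) \<le> (\<integral>\<^sup>+x. f x * indicator A x \<partial>M)"
    using EA by (intro nn_integral_mono) (auto split: split_indicator)
  have le1: "c * emeasure M E \<le> (\<integral>\<^sup>+x. f x * indicator E x \<partial>M)" using H[OF E EA] .
  have fin2: "(\<integral>\<^sup>+x. f x * indicator E x \<partial>M) \<noteq> \<infinity>" using fE fin by (auto simp: top_unique)
  have ae: "AE x in M. c * indicator E x \<le> f x * indicator E x"
  proof (rule ccontr)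
    assume nae: "\<not> (AE x in M. c * indicator E x \<le> f x * indicator E x)"
    have "(\<integral>\<^sup>+x. f x * indicator E x \<partial>M) < (\<integral>\<^sup>+x. c * indicator E x \<partial>M)"
      by (rule nn_integral_less[OF _ _ fin2 _ nae])
        (auto simp: E_def split: split_indicator intro!: AE_I2 less_imp_le)
    then show False using le1 E by (simp add: nn_integral_cmult_indicator)
  qed
  show ?thesis
    using ae AE_space
  proof eventually_elim
    case (elim x)
    show ?case
    proof
      assume xA: "x \<in> A"
      show "c \<le> f x"
      proof (cases "f x < c")
        case True
        then have "x \<in> E" using xA elim(2) by (simp add: E_def)
        then show ?thesis using elim(1) by simp
      qed simp
    qed
  qed
qed



theorem mainTheorem10:
  fixes T :: "real set"
    and P :: "real \<Rightarrow> 'a::metric_space \<Rightarrow> 'a measure"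
    and \<Lambda> \<pi> \<nu>1 :: "'a measure"
    and A :: "'a set"
    and \<psi> :: "'a \<Rightarrow> real"
    and Pt :: "'a \<Rightarrow> 'a measure"
    and t0 t1 a c0' c1 :: real
  assumes "time_domain T"
    and "submarkov_semigroup T P"
    and "ref_measure \<Lambda>"
    and "is_QSD T P \<pi>"
    \<comment> \<open>(DAD)\<close>
    and "P_inf \<Lambda> \<pi>"
    and "A \<in> sets borel" and "emeasure \<Lambda> A < \<infinity>"
    and "borel_prob \<nu>1" and "emeasure \<nu>1 (UNIV - A) = 0"
    and "c1 > 0" and "t1 \<in> T" and "t1 > 0"
    and "\<forall>x. measure (P t1 x) UNIV > 0"
    and "\<forall>x. \<forall>B\<in>sets borel. measure (P t1 x) B / measure (P t1 x) UNIV \<ge> c1 * measure \<nu>1 B"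
    and "cond_AD T P \<Lambda> \<pi> \<psi> t0 a Pt c0' (norm_restr \<Lambda> A)"
  shows "\<forall>x. \<forall>B\<in>sets borel.
           measure (P (t0 + t1) x) B / measure (P (t0 + t1) x) UNIV
             \<ge> (lambda_QSD P \<pi> powr t0 * c0' * c1
                 / (measure \<Lambda> A * sup_norm \<psi> * sup_norm (\<lambda>x. 1 / \<psi> x) * dens_Linf \<Lambda> \<pi>))
               * measure \<pi> B"
proof -
  note td = assms(1) and S = assms(2) and Q = assms(4)
  interpret qsdctx T P \<pi> using td S Q by unfold_locales
  have AD: "Bb_pos \<psi>" "t0 \<in> T" "t0 > 0" "a > 0" "submarkov_kernel Pt"
    "\<And>D. D\<in>sets (borel \<Otimes>\<^sub>M borel) \<Longrightarrow>
        (\<integral>\<^sup>+ x. ennreal (\<psi> x) * (\<integral>\<^sup>+ y. indicator D (x, y) \<partial>(P t0 x)) \<partial>\<Lambda>)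
        = ennreal a * (\<integral>\<^sup>+ y. ennreal (\<psi> y) * (\<integral>\<^sup>+ x. indicator D (x, y) \<partial>(Pt y)) \<partial>\<Lambda>)"
    "AE y in \<Lambda>. measure (Pt y) UNIV > 0"
    "c0' > 0"
    "AE y in \<Lambda>. \<forall>B\<in>sets borel. measure (Pt y) B / measure (Pt y) UNIV \<ge> c0' * measure (norm_restr \<Lambda> A) B"
    using assms(15) unfolding cond_AD_def by auto
  have sL: "sets \<Lambda> = sets borel" and sfL: "sigma_finite_measure \<Lambda>"
    using assms(3) by (auto simp: ref_measure_def)
  have spL: "space \<Lambda> = UNIV" using sets_eq_imp_space_eq[OF sL] by simp
  have mLb: "\<And>M. measurable \<Lambda> M = measurable borel M" by (rule measurable_cong_sets[OF sL refl])
  have bpi: "borel_prob \<pi>" using bp .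
  have spi: "sets \<pi> = sets borel" using bpi by (simp add: borel_prob_def)
  have Kt0: "submarkov_kernel (P t0)" using K[OF AD(2)] .
  have Kt1: "submarkov_kernel (P t1)" using K[OF assms(11)] .
  have Kt01: "submarkov_kernel (P (t0 + t1))" using K[OF td2[OF td AD(2) assms(11)]] .
  define h where "h = RN_deriv \<Lambda> \<pi>"
  define H where "H = dens_Linf \<Lambda> \<pi>"
  define Sn where "Sn = sup_norm \<psi>"
  define Qn where "Qn = sup_norm (\<lambda>x. 1 / \<psi> x)"
  define mA where "mA = measure \<Lambda> A"
  define l where "l = lambda_QSD P \<pi>"
  have l_eq: "l = L 1" by (simp add: l_def lambda_QSD_def L_def)
  have one: "1 \<in> T" using td1[OF td, of 1] by simp
  have l0: "l > 0" using Lpos[OF one] l_eq by simp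
  define c3 where "c3 = l powr t0 * c0' * c1 / (mA * Sn * Qn * H)"
  have psi_m: "\<psi> \<in> borel_measurable borel" and psi_b: "bounded (range \<psi>)" and psi_inf: "(INF x. \<psi> x) > 0"
    using AD(1) by (auto simp: Bb_pos_def)
  obtain M where M: "\<And>x. \<bar>\<psi> x\<bar> \<le> M" using psi_b by (auto simp: bounded_real)
  have bb: "bdd_below (range \<psi>)" proof (rule bdd_belowI[where m="-M"]) fix x assume "x \<in> range \<psi>" then obtain y where "x = \<psi> y" by auto then show "-M \<le> x" using M[of y] by simp qed
  define i0 where "i0 = (INF x. \<psi> x)"
  have psi_ge: "\<psi> x \<ge> i0" for x unfolding i0_def using bb by (rule cINF_lower) simp
  have psi_pos: "\<psi> x > 0" for x using psi_ge[of x] psi_inf by (simp add: i0_def)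
  have psi_le: "\<psi> x \<le> Sn" for x
  proof -
    have "bdd_above (range (\<lambda>x. \<bar>\<psi> x\<bar>))" using M by (intro bdd_aboveI[where M=M]) auto
    then have "\<bar>\<psi> x\<bar> \<le> Sn" unfolding Sn_def sup_norm_def by (rule cSUP_upper[OF UNIV_I])
    then show ?thesis by simp
  qed
  have ipsi_le: "1 / \<psi> x \<le> Qn" for x
  proof -
    have "\<bar>1 / \<psi> y\<bar> \<le> 1 / i0" for y
      using psi_pos[of y] psi_ge[of y] psi_inf by (simp add: i0_def frac_le)
    then have "bdd_above (range (\<lambda>x. \<bar>1 / \<psi> x\<bar>))" by (intro bdd_aboveI[where M="1/i0"]) auto
    then have "\<bar>1 / \<psi> x\<bar> \<le> Qn" unfolding Qn_def sup_norm_def by (rule cSUP_upper[OF UNIV_I])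
    then show ?thesis using psi_pos[of x] by simp
  qed
  have Sn_pos: "Sn > 0" using psi_pos[of undefined] psi_le[of undefined] by simp
  have Qn_pos: "Qn > 0" using psi_pos[of undefined] ipsi_le[of undefined] by (smt (verit) divide_pos_pos)
  have one_le: "1 \<le> Qn * \<psi> x" for x
    using ipsi_le[of x] psi_pos[of x] by (simp add: divide_le_eq)
  have H0: "H \<ge> 0" by (simp add: H_def dens_Linf_def)
  have mA0: "mA \<ge> 0" by (simp add: mA_def)
  show ?thesis
  proof (cases "mA * Sn * Qn * H = 0")
    case True
    then have "c3 = 0" by (simp add: c3_def)
    then show ?thesis unfolding c3_def[symmetric] l_def[symmetric] mA_def[symmetric] Sn_def[symmetric]
        Qn_def[symmetric] H_def[symmetric]
      by simp
  next
    case False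
    then have mApos: "mA > 0" and Hpos: "H > 0" using H0 mA0 by auto
    have ac: "absolutely_continuous \<Lambda> \<pi>" and ess: "esssup \<Lambda> h < \<infinity>"
      using assms(5) by (auto simp: P_inf_def h_def)
    have h_m[measurable]: "h \<in> borel_measurable \<Lambda>" unfolding h_def by (rule borel_measurable_RN_deriv)
    have hH: "AE x in \<Lambda>. h x \<le> ennreal H"
    proof -
      have "esssup \<Lambda> h = ennreal H" using ess by (simp add: H_def dens_Linf_def h_def ennreal_enn2real less_top)
      then show ?thesis using esssup_AE[of h \<Lambda>] by simp
    qed
    have RN: "(\<integral>\<^sup>+x. f x \<partial>\<pi>) = (\<integral>\<^sup>+x. h x * f x \<partial>\<Lambda>)" if "f \<in> borel_measurable \<Lambda>" for f
      unfolding h_def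
      by (rule sigma_finite_measure.RN_deriv_nn_integral[OF sfL ac _ that]) (simp add: spi sL)
    have LA: "emeasure \<Lambda> A = ennreal mA" using assms(7) unfolding mA_def by (intro emeasure_eq_ennreal_measure) simp
    have psi_mL[measurable]: "\<psi> \<in> borel_measurable \<Lambda>" using psi_m by (simp add: mLb)
    define K where "K = l powr t0 * c0' / (mA * Sn * Qn * H)"
    have stepA: "AE y in \<Lambda>. y \<in> A \<longrightarrow> K * measure \<pi> B \<le> measure (P t0 y) B" if B: "B \<in> sets borel" for B
    proof -
      define pB where "pB = measure \<pi> B"
      have pB0: "pB \<ge> 0" by (simp add: pB_def)
      have eP[measurable]: "(\<lambda>x. emeasure (P t0 x) B) \<in> borel_measurable \<Lambda>"
        using kern_meas(2)[OF Kt0 B] by (simp add: mLb)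
      have ePt[measurable]: "(\<lambda>y. emeasure (Pt y) C) \<in> borel_measurable \<Lambda>" if "C \<in> sets borel" for C
        using kern_meas(2)[OF AD(5) that] by (simp add: mLb)
      have BL[measurable]: "B \<in> sets \<Lambda>" using B sL by simp
      have Lt0: "L t0 > 0" using Lpos[OF AD(2)] .
      have muB: "muP \<pi> P t0 B = L t0 * pB"
      proof -
        have "muP \<pi> P t0 B / L t0 = pB" using Q AD(2) B unfolding is_QSD_def L_def pB_def by blast
        then show ?thesis using Lt0 by (simp add: divide_eq_eq mult.commute)
      qed
      define M1 where "M1 = (\<integral>\<^sup>+y. ennreal (\<psi> y) * (indicator B y * emeasure (Pt y) UNIV) \<partial>\<Lambda>)"
      have A3: "(\<integral>\<^sup>+x. ennreal (\<psi> x) * emeasure (P t0 x) B \<partial>\<Lambda>) = ennreal a * M1"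
      proof -
        have D: "UNIV \<times> B \<in> sets (borel \<Otimes>\<^sub>M borel)" using B by simp
        have e1: "(\<integral>\<^sup>+ y. indicator (UNIV \<times> B) (x, y) \<partial>(P t0 x)) = emeasure (P t0 x) B" for x
        proof -
          have "(\<integral>\<^sup>+ y. indicator (UNIV \<times> B) (x, y) \<partial>(P t0 x)) = (\<integral>\<^sup>+ y. indicator B y \<partial>(P t0 x))"
            by (intro nn_integral_cong) (simp add: indicator_def)
          also have "\<dots> = emeasure (P t0 x) B" using B kern_facts(1)[OF Kt0, of x] by simp
          finally show ?thesis .
        qed
        have e2: "(\<integral>\<^sup>+ x. indicator (UNIV \<times> B) (x, y) \<partial>(Pt y)) = indicator B y * emeasure (Pt y) UNIV" for y
        proof -
          have "(\<integral>\<^sup>+ x. indicator (UNIV \<times> B) (x, y) \<partial>(Pt y)) = (\<integral>\<^sup>+ x. indicator B y \<partial>(Pt y))"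
            by (intro nn_integral_cong) (simp add: indicator_def)
          also have "\<dots> = indicator B y * emeasure (Pt y) UNIV" using kern_facts(2)[OF AD(5), of y] by simp
          finally show ?thesis .
        qed
        show ?thesis using AD(6)[OF D] unfolding e1 e2 M1_def .
      qed
      have star: "ennreal (L t0 * pB) \<le> ennreal (H * Qn) * (ennreal a * M1)"
      proof -
        have "ennreal (L t0 * pB) = (\<integral>\<^sup>+x. emeasure (P t0 x) B \<partial>\<pi>)"
          using kern_int[OF Kt0 B bpi] muB by (simp add: muP_def)
        also have "\<dots> = (\<integral>\<^sup>+x. h x * emeasure (P t0 x) B \<partial>\<Lambda>)" by (rule RN) simp
        also have "\<dots> \<le> (\<integral>\<^sup>+x. ennreal (H * Qn) * (ennreal (\<psi> x) * emeasure (P t0 x) B) \<partial>\<Lambda>)"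
        proof (rule nn_integral_mono_AE)
          show "AE x in \<Lambda>. h x * emeasure (P t0 x) B \<le> ennreal (H * Qn) * (ennreal (\<psi> x) * emeasure (P t0 x) B)"
            using hH
          proof eventually_elim
            case (elim x)
            have "h x * emeasure (P t0 x) B \<le> ennreal H * emeasure (P t0 x) B"
              using elim by (intro mult_right_mono) auto
            also have "ennreal H \<le> ennreal (H * Qn * \<psi> x)"
              using one_le[of x] H0 by (intro ennreal_leI) (simp add: mult.assoc mult_le_cancel_left1)
            then have "ennreal H * emeasure (P t0 x) B \<le> ennreal (H * Qn * \<psi> x) * emeasure (P t0 x) B"
              by (intro mult_right_mono) auto
            also have "ennreal (H * Qn * \<psi> x) = ennreal (H * Qn) * ennreal (\<psi> x)"
              using H0 Qn_pos psi_pos[of x] by (simp add: ennreal_mult)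
            finally show ?case by (simp add: mult.assoc)
          qed
        qed
        also have "\<dots> = ennreal (H * Qn) * (\<integral>\<^sup>+x. ennreal (\<psi> x) * emeasure (P t0 x) B \<partial>\<Lambda>)"
          by (rule nn_integral_cmult) simp
        finally show ?thesis unfolding A3 .
      qed
      define cc where "cc = c0' * L t0 * pB / (mA * H * Qn)"
      have cc0: "cc \<ge> 0" using AD(8) Lt0 pB0 mApos Hpos Qn_pos by (simp add: cc_def)
      have HQ: "ennreal (L t0 * pB / (H * Qn)) \<le> ennreal a * M1"
      proof -
        have "ennreal (H * Qn) * ennreal (L t0 * pB / (H * Qn)) = ennreal (L t0 * pB)"
          using Hpos Qn_pos Lt0 pB0 by (subst ennreal_mult[symmetric]) auto
        with star have "ennreal (H * Qn) * ennreal (L t0 * pB / (H * Qn)) \<le> ennreal (H * Qn) * (ennreal a * M1)"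
          by simp
        then show ?thesis using Hpos Qn_pos by (subst (asm) ennreal_mult_le_mult_iff) auto
      qed
      define f where "f x = ennreal (\<psi> x) * emeasure (P t0 x) B" for x
      have f_m[measurable]: "f \<in> borel_measurable \<Lambda>" unfolding f_def by measurable
      have AL[measurable]: "A \<in> sets \<Lambda>" using assms(6) sL by simp
      have A4: "ennreal cc * emeasure \<Lambda> A' \<le> (\<integral>\<^sup>+x. f x * indicator A' x \<partial>\<Lambda>)"
        if A'[measurable]: "A' \<in> sets \<Lambda>" and A'A: "A' \<subseteq> A" for A'
      proof -
        have A'b: "A' \<in> sets borel" using A' sL by simp
        define mA' where "mA' = measure \<Lambda> A'"
        have LA': "emeasure \<Lambda> A' = ennreal mA'"
        proof -
          have "emeasure \<Lambda> A' \<le> emeasure \<Lambda> A" using A'A by (intro emeasure_mono) auto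
          then show ?thesis unfolding mA'_def using assms(7) by (intro emeasure_eq_ennreal_measure) (auto simp: top_unique)
        qed
        have mA'0: "mA' \<ge> 0" by (simp add: mA'_def)
        have nuA': "measure (norm_restr \<Lambda> A) A' = mA' / mA"
        proof -
          have "emeasure (norm_restr \<Lambda> A) A' = (\<integral>\<^sup>+x. indicator A x / emeasure \<Lambda> A * indicator A' x \<partial>\<Lambda>)"
            unfolding norm_restr_def by (rule emeasure_density) auto
          also have "\<dots> = (\<integral>\<^sup>+x. indicator A' x / emeasure \<Lambda> A \<partial>\<Lambda>)"
            using A'A by (intro nn_integral_cong) (auto simp: indicator_def)
          also have "\<dots> = emeasure \<Lambda> A' / emeasure \<Lambda> A"
            by (subst nn_integral_divide) auto
          also have "\<dots> = ennreal (mA' / mA)" using LA' LA mApos mA'0 by (simp add: divide_ennreal)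
          finally show ?thesis using divide_nonneg_nonneg[OF mA'0 less_imp_le[OF mApos]] by (simp add: measure_def)
        qed
        have D: "A' \<times> B \<in> sets (borel \<Otimes>\<^sub>M borel)" using B A'b by simp
        have e1: "(\<integral>\<^sup>+ y. indicator (A' \<times> B) (x, y) \<partial>(P t0 x)) = indicator A' x * emeasure (P t0 x) B" for x
        proof -
          have "(\<integral>\<^sup>+ y. indicator (A' \<times> B) (x, y) \<partial>(P t0 x)) = (\<integral>\<^sup>+ y. indicator A' x * indicator B y \<partial>(P t0 x))"
            by (intro nn_integral_cong) (simp add: indicator_def)
          also have "\<dots> = indicator A' x * emeasure (P t0 x) B" using B kern_facts(1)[OF Kt0, of x]
            by (simp add: nn_integral_cmult_indicator)
          finally show ?thesis .
        qed
        have e2: "(\<integral>\<^sup>+ x. indicator (A' \<times> B) (x, y) \<partial>(Pt y)) = indicator B y * emeasure (Pt y) A'" for y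
        proof -
          have "(\<integral>\<^sup>+ x. indicator (A' \<times> B) (x, y) \<partial>(Pt y)) = (\<integral>\<^sup>+ x. indicator B y * indicator A' x \<partial>(Pt y))"
            by (intro nn_integral_cong) (auto simp: indicator_def)
          also have "\<dots> = indicator B y * emeasure (Pt y) A'" using A'b kern_facts(1)[OF AD(5), of y]
            by (simp add: nn_integral_cmult_indicator)
          finally show ?thesis .
        qed
        have X1: "(\<integral>\<^sup>+x. f x * indicator A' x \<partial>\<Lambda>) = ennreal a * (\<integral>\<^sup>+y. ennreal (\<psi> y) * (indicator B y * emeasure (Pt y) A') \<partial>\<Lambda>)"
        proof -
          have "(\<integral>\<^sup>+x. f x * indicator A' x \<partial>\<Lambda>) = (\<integral>\<^sup>+ x. ennreal (\<psi> x) * (\<integral>\<^sup>+ y. indicator (A' \<times> B) (x, y) \<partial>(P t0 x)) \<partial>\<Lambda>)"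
            unfolding e1 f_def by (intro nn_integral_cong) (simp add: ac_simps)
          also have "\<dots> = ennreal a * (\<integral>\<^sup>+y. ennreal (\<psi> y) * (indicator B y * emeasure (Pt y) A') \<partial>\<Lambda>)"
            using AD(6)[OF D] unfolding e2 .
          finally show ?thesis .
        qed
        have X2: "ennreal a * (\<integral>\<^sup>+y. ennreal (c0' * (mA' / mA)) * (ennreal (\<psi> y) * (indicator B y * emeasure (Pt y) UNIV)) \<partial>\<Lambda>) \<le> ennreal a * (\<integral>\<^sup>+y. ennreal (\<psi> y) * (indicator B y * emeasure (Pt y) A') \<partial>\<Lambda>)"
        proof (intro mult_left_mono nn_integral_mono_AE)
          show "AE y in \<Lambda>. ennreal (c0' * (mA' / mA)) * (ennreal (\<psi> y) * (indicator B y * emeasure (Pt y) UNIV))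
              \<le> ennreal (\<psi> y) * (indicator B y * emeasure (Pt y) A')"
            using AD(7) AD(9)
          proof eventually_elim
            case (elim y)
            have "measure (Pt y) A' / measure (Pt y) UNIV \<ge> c0' * (mA' / mA)"
              using elim(2) A'b nuA' by auto
            then have le: "c0' * (mA' / mA) * measure (Pt y) UNIV \<le> measure (Pt y) A'"
              using elim(1) by (simp add: le_divide_eq)
            have "ennreal (c0' * (mA' / mA)) * emeasure (Pt y) UNIV = ennreal (c0' * (mA' / mA) * measure (Pt y) UNIV)"
              unfolding kern_emeasure[OF AD(5), of y UNIV] by (rule ennreal_mult[symmetric]) (use AD(8) mA'0 mApos in auto)
            also have "\<dots> \<le> emeasure (Pt y) A'"
              using le by (simp add: kern_emeasure[OF AD(5)])
            finally have "ennreal (c0' * (mA' / mA)) * emeasure (Pt y) UNIV \<le> emeasure (Pt y) A'" .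
            then have "ennreal (c0' * (mA' / mA)) * (indicator B y * emeasure (Pt y) UNIV) \<le> indicator B y * emeasure (Pt y) A'"
              by (auto simp: indicator_def)
            then have "ennreal (\<psi> y) * (ennreal (c0' * (mA' / mA)) * (indicator B y * emeasure (Pt y) UNIV)) \<le> ennreal (\<psi> y) * (indicator B y * emeasure (Pt y) A')"
              by (intro mult_left_mono) auto
            then show ?case by (simp add: ac_simps)
          qed
        qed simp
        have X3: "ennreal a * (\<integral>\<^sup>+y. ennreal (c0' * (mA' / mA)) * (ennreal (\<psi> y) * (indicator B y * emeasure (Pt y) UNIV)) \<partial>\<Lambda>) = ennreal (c0' * (mA' / mA)) * (ennreal a * M1)"
          unfolding M1_def by (subst nn_integral_cmult) (auto simp: ac_simps)
        have X4: "ennreal (c0' * (mA' / mA)) * ennreal (L t0 * pB / (H * Qn)) \<le> ennreal (c0' * (mA' / mA)) * (ennreal a * M1)"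
          using HQ by (intro mult_left_mono) auto
        have X5: "ennreal (c0' * (mA' / mA)) * ennreal (L t0 * pB / (H * Qn)) = ennreal cc * emeasure \<Lambda> A'"
          unfolding LA' using AD(8) mA'0 mApos Lt0 pB0 Hpos Qn_pos cc0
          by (simp add: cc_def flip: ennreal_mult) (simp add: field_simps)
        show ?thesis using X1 X2 X3 X4 X5 by (metis order_trans)
      qed
      have fin: "(\<integral>\<^sup>+x. f x * indicator A x \<partial>\<Lambda>) \<noteq> \<infinity>"
      proof -
        have "(\<integral>\<^sup>+x. f x * indicator A x \<partial>\<Lambda>) \<le> (\<integral>\<^sup>+x. ennreal Sn * indicator A x \<partial>\<Lambda>)"
        proof (intro nn_integral_mono)
          fix x
          have "f x \<le> ennreal Sn"
          proof -
            have "f x = ennreal (\<psi> x * measure (P t0 x) B)"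
              unfolding f_def kern_emeasure[OF Kt0] using psi_pos[of x] by (simp add: ennreal_mult)
            also have "\<dots> \<le> ennreal Sn"
            proof (intro ennreal_leI)
              have "\<psi> x * measure (P t0 x) B \<le> \<psi> x * 1"
                using kern_emeasure(2)[OF Kt0] psi_pos[of x] by (intro mult_left_mono) auto
              then show "\<psi> x * measure (P t0 x) B \<le> Sn" using psi_le[of x] by simp
            qed
            finally show ?thesis .
          qed
          then show "f x * indicator A x \<le> ennreal Sn * indicator A x" by (auto simp: indicator_def)
        qed
        also have "\<dots> = ennreal Sn * ennreal mA" using AL LA by (simp add: nn_integral_cmult_indicator)
        finally show ?thesis using Sn_pos mA0 by (auto simp: top_unique simp flip: ennreal_mult)
      qed
      have ae: "AE x in \<Lambda>. x \<in> A \<longrightarrow> ennreal cc \<le> f x"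
        by (rule AE_from_int[OF f_m AL fin A4])
      show ?thesis using ae
      proof eventually_elim
        case (elim y)
        show ?case
        proof
          assume yA: "y \<in> A"
          define m where "m = measure (P t0 y) B"
          have m0: "m \<ge> 0" by (simp add: m_def)
          have "ennreal cc \<le> ennreal (\<psi> y * m)"
            using elim yA unfolding f_def kern_emeasure[OF Kt0] m_def using psi_pos[of y]
            by (simp add: ennreal_mult)
          then have ccm: "cc \<le> \<psi> y * m" using psi_pos[of y] m0 by simp
          have lt: "l powr t0 \<le> L t0" using L_powr[OF AD(2,3)] l_eq by simp
          have "K * pB = l powr t0 * (c0' * pB / (mA * Sn * Qn * H))" by (simp add: K_def)
          also have "\<dots> \<le> L t0 * (c0' * pB / (mA * Sn * Qn * H))"
            using lt AD(8) pB0 mApos Sn_pos Qn_pos Hpos by (intro mult_right_mono) auto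
          also have "\<dots> = cc / Sn" by (simp add: cc_def field_simps)
          also have "\<dots> \<le> cc / \<psi> y" using cc0 psi_pos[of y] psi_le[of y] by (intro divide_left_mono) auto
          also have "\<dots> \<le> m" using ccm psi_pos[of y] by (simp add: divide_le_eq mult.commute)
          finally show "K * measure \<pi> B \<le> measure (P t0 y) B" by (simp add: pB_def m_def)
        qed
      qed
    qed
    have K0: "K \<ge> 0" using l0 AD(8) mApos Sn_pos Qn_pos Hpos by (simp add: K_def)
    have c3K: "c3 = K * c1" by (simp add: c3_def K_def)
    have m1pos: "measure (P t1 x) UNIV > 0" for x using assms(13) by simp
    have dob: "c1 * measure \<nu>1 C * measure (P t1 x) UNIV \<le> measure (P t1 x) C" if "C \<in> sets borel" for x C
      using assms(14) that m1pos[of x] by (auto simp: le_divide_eq mult.commute)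
    have stepB: "emeasure \<nu>1 N = 0" if N: "N \<in> sets borel" "emeasure \<Lambda> N = 0" for N
    proof -
      have "N \<in> null_sets \<Lambda>" using N sL by auto
      then have piN: "measure \<pi> N = 0" using ac unfolding absolutely_continuous_def by (auto simp: measure_def null_sets_def)
      have Lt1: "L t1 > 0" using Lpos[OF assms(11)] .
      have muN: "muP \<pi> P t1 N = 0"
      proof -
        have "muP \<pi> P t1 N / L t1 = measure \<pi> N" using Q assms(11) N(1) unfolding is_QSD_def L_def by blast
        then show ?thesis using Lt1 piN by simp
      qed
      have nu0: "measure \<nu>1 N \<ge> 0" by simp
      have "ennreal (c1 * measure \<nu>1 N) * ennreal (L t1) = (\<integral>\<^sup>+x. ennreal (c1 * measure \<nu>1 N) * emeasure (P t1 x) UNIV \<partial>\<pi>)"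
        using L_enn[OF assms(11)] kern_meas(2)[OF Kt1, of UNIV]
        by (subst nn_integral_cmult) (auto simp: measurable_cong_sets[OF spi refl])
      also have "\<dots> \<le> (\<integral>\<^sup>+x. emeasure (P t1 x) N \<partial>\<pi>)"
      proof (intro nn_integral_mono)
        fix x
        show "ennreal (c1 * measure \<nu>1 N) * emeasure (P t1 x) UNIV \<le> emeasure (P t1 x) N"
          unfolding kern_emeasure[OF Kt1] using dob[OF N(1), of x] assms(10) nu0
          by (simp flip: ennreal_mult)
      qed
      also have "\<dots> = 0" using kern_int[OF Kt1 N(1) bpi] muN by (simp add: muP_def)
      finally have "ennreal (c1 * measure \<nu>1 N * L t1) = 0"
        using assms(10) nu0 Lt1 by (simp add: ennreal_mult)
      then have "c1 * measure \<nu>1 N * L t1 \<le> 0" by (simp add: ennreal_eq_0_iff)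
      then have "measure \<nu>1 N = 0" using assms(10) Lt1 nu0
        by (metis mult_pos_pos mult_less_0_iff not_le order.order_iff_strict)
      then show ?thesis
      proof -
        assume m0: "measure \<nu>1 N = 0"
        interpret nu: prob_space \<nu>1 using assms(8) by (simp add: borel_prob_def)
        show ?thesis using m0 by (simp add: nu.emeasure_eq_measure)
      qed
    qed
    have main: "c3 * measure \<pi> B * measure (P t1 x) UNIV \<le> measure (P (t0 + t1) x) B"
      if B: "B \<in> sets borel" for x B
    proof -
      interpret nu: prob_space \<nu>1 using assms(8) by (simp add: borel_prob_def)
      have snu: "sets \<nu>1 = sets borel" using assms(8) by (simp add: borel_prob_def)
      define pB where "pB = measure \<pi> B"
      have pB0: "pB \<ge> 0" by (simp add: pB_def)
      have [measurable]: "(\<lambda>y. measure (P t0 y) B) \<in> borel_measurable borel" using kern_meas(1)[OF Kt0 B] .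
      define G where "G = {y \<in> space borel. K * pB \<le> measure (P t0 y) B}"
      have G[measurable]: "G \<in> sets borel" unfolding G_def by measurable
      obtain N0 where N0: "\<And>y. y \<in> space \<Lambda> - N0 \<Longrightarrow> y \<in> A \<longrightarrow> K * measure \<pi> B \<le> measure (P t0 y) B"
        "N0 \<in> null_sets \<Lambda>" using stepA[OF B] by (elim AE_E3) blast
      have N0b: "N0 \<in> sets borel" "emeasure \<Lambda> N0 = 0" using N0(2) sL by auto
      have nuN0: "emeasure \<nu>1 N0 = 0" using stepB[OF N0b] .
      have sub: "UNIV - G \<subseteq> N0 \<union> (UNIV - A)" using N0(1) spL by (auto simp: G_def pB_def)
      have "emeasure \<nu>1 (UNIV - G) \<le> emeasure \<nu>1 (N0 \<union> (UNIV - A))"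
        using sub N0b assms(6) snu by (intro emeasure_mono) auto
      also have "\<dots> \<le> emeasure \<nu>1 N0 + emeasure \<nu>1 (UNIV - A)"
        using N0b assms(6) snu by (intro emeasure_subadditive) auto
      also have "\<dots> = 0" using nuN0 assms(9) by simp
      finally have "emeasure \<nu>1 (UNIV - G) = 0" by simp
      then have "measure \<nu>1 (UNIV - G) = 0" by (simp add: measure_def)
      moreover have "measure \<nu>1 (space \<nu>1 - G) = 1 - measure \<nu>1 G" using G snu by (intro nu.prob_compl) auto
      moreover have "space \<nu>1 = UNIV" using sets_eq_imp_space_eq[OF snu] by simp
      ultimately have nuG: "measure \<nu>1 G = 1" by simp
      have m1G: "c1 * measure (P t1 x) UNIV \<le> measure (P t1 x) G" using dob[OF G, of x] nuG by simp
      have KpB: "K * pB \<ge> 0" using K0 pB0 by simp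
      have "ennreal (K * pB * (c1 * measure (P t1 x) UNIV)) \<le> ennreal (K * pB * measure (P t1 x) G)"
        using m1G KpB by (intro ennreal_leI mult_left_mono) auto
      also have "\<dots> = ennreal (K * pB) * emeasure (P t1 x) G"
        using KpB by (simp add: kern_emeasure[OF Kt1] ennreal_mult)
      also have "\<dots> = (\<integral>\<^sup>+y. ennreal (K * pB) * indicator G y \<partial>P t1 x)"
        using G kern_facts(1)[OF Kt1, of x] by (simp add: nn_integral_cmult_indicator)
      also have "\<dots> \<le> (\<integral>\<^sup>+y. emeasure (P t0 y) B \<partial>P t1 x)"
      proof (intro nn_integral_mono)
        fix y
        show "ennreal (K * pB) * indicator G y \<le> emeasure (P t0 y) B"
          using KpB by (auto simp: indicator_def G_def kern_emeasure[OF Kt0])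
      qed
      also have "\<dots> = emeasure (P (t1 + t0) x) B"
        using S assms(11) AD(2) B unfolding submarkov_semigroup_def by auto
      also have "\<dots> = ennreal (measure (P (t0 + t1) x) B)" by (simp add: add.commute kern_emeasure[OF Kt01])
      finally have "K * pB * (c1 * measure (P t1 x) UNIV) \<le> measure (P (t0 + t1) x) B" by simp
      then show ?thesis by (simp add: c3K pB_def ac_simps)
    qed
    have tot: "measure (P (t0 + t1) x) UNIV \<le> measure (P t1 x) UNIV" for x
    proof -
      have "ennreal (measure (P (t0 + t1) x) UNIV) = emeasure (P (t1 + t0) x) UNIV"
        by (simp add: add.commute kern_emeasure[OF Kt01])
      also have "\<dots> = (\<integral>\<^sup>+y. emeasure (P t0 y) UNIV \<partial>P t1 x)"
        using S assms(11) AD(2) unfolding submarkov_semigroup_def by auto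
      also have "\<dots> \<le> (\<integral>\<^sup>+y. 1 \<partial>P t1 x)"
        by (intro nn_integral_mono) (simp add: kern_emeasure[OF Kt0])
      also have "\<dots> = ennreal (measure (P t1 x) UNIV)"
        using kern_facts(2)[OF Kt1, of x] by (simp add: kern_emeasure[OF Kt1])
      finally show ?thesis by simp
    qed
    have goal: "\<forall>x. \<forall>B\<in>sets borel. measure (P (t0+t1) x) B / measure (P (t0+t1) x) UNIV \<ge> c3 * measure \<pi> B"
    proof (intro allI ballI)
      fix x and B :: "'a set" assume B: "B \<in> sets borel"
      have c30: "c3 * measure \<pi> B \<ge> 0" using K0 assms(10) c3K by simp
      show "measure (P (t0+t1) x) B / measure (P (t0+t1) x) UNIV \<ge> c3 * measure \<pi> B"
      proof (cases "measure (P (t0+t1) x) UNIV > 0")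
        case True
        have "c3 * measure \<pi> B * measure (P (t0+t1) x) UNIV \<le> c3 * measure \<pi> B * measure (P t1 x) UNIV"
          using tot[of x] c30 by (intro mult_left_mono) auto
        also have "\<dots> \<le> measure (P (t0 + t1) x) B" using main[OF B] .
        finally show ?thesis using True by (simp add: le_divide_eq)
      next
        case False
        then have "measure (P (t0+t1) x) UNIV = 0" using measure_nonneg[of "P (t0+t1) x" UNIV] by linarith
        moreover have "measure (P (t0+t1) x) B \<le> measure (P (t0+t1) x) UNIV"
        proof -
          interpret sp: subprob_space "P (t0+t1) x" using kern_facts(3)[OF Kt01] .
          show ?thesis using sp.bounded_measure[of B] kern_facts(2)[OF Kt01, of x] by simp
        qed
        ultimately have "measure (P (t0+t1) x) B = 0" using measure_nonneg[of "P (t0+t1) x" B] by linarith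
        then have "c3 * measure \<pi> B * measure (P t1 x) UNIV \<le> 0" using main[OF B, of x] by simp
        then have "c3 * measure \<pi> B \<le> 0" using m1pos[of x] by (simp add: mult_le_0_iff)
        then show ?thesis using divide_nonneg_nonneg[OF measure_nonneg measure_nonneg, of "P (t0+t1) x" B "P (t0+t1) x" UNIV] by linarith
      qed
    qed
    then show ?thesis by (simp add: c3_def l_def mA_def Sn_def Qn_def H_def)
  qed
qed


end
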